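(* Let $\varepsilon>0$, let $R_1,\dots,R_n:[d]\to\mathcal Y$ be $\varepsilon$-private randomizers with $\mathcal Y$ finite and $d$ even, let $|\vec R|_{\neq}$ be the number of distinct randomizers among them, and suppose $d>4(e^{2\varepsilon}-1)^2\ln(12|\mathcal Y|\cdot|\vec R|_{\neq})$. If $H$ is chosen uniformly at random among subsets of $[d]$ of size $d/2$, then with probability at least $2/3$ over $H$, every randomizer $Q_{H,R_i}$, $i\in[n]$, is $\varepsilon'$-private, where \[ \varepsilon'=(e^{2\varepsilon}-1)\sqrt{\frac{16}{d}\ln\left(12|\mathcal Y|\cdot|\vec R|_{\neq}\right)} . \]
   Context: A randomizer $R:\mathcal X\to\mathcal Y$ is $\varepsilon$-private if for all $x,x'\in\mathcal X$ and all $Y\subseteq\mathcal Y$, $\Pr[R(x)\in Y]\le e^{\varepsilon}\Pr[R(x')\in Y]$. $\mathbf U_H$ is the uniform distribution on $H\subseteq[d]$, $\overline H=[d]\setminus H$, and $R(\mathbf U_H)$ is the distribution of $R(\hat x)$ with $\hat x\sim\mathbf U_H$. For $H\subset[d]$ with $|H|=d/2$ and a randomizer $R:[d]\to\mathcal Y$, $Q_{H,R}:\{\pm1\}\to\mathcal Y$ is the randomizer that on input $+1$ outputs a sample of $R(\mathbf U_H)$ and on input $-1$ outputs a sample of $R(\mathbf U_{\overline H})$. *)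

theory Defs
  imports "HOL-Probability.Probability"
begin

definition dom_d :: "nat \<Rightarrow> nat set" where
  "dom_d d = {1..d}"

definition eps_private :: "'x set \<Rightarrow> ('x \<Rightarrow> 'y pmf) \<Rightarrow> real \<Rightarrow> bool" where
  "eps_private X R \<epsilon> \<longleftrightarrow>
     (\<forall>x\<in>X. \<forall>x'\<in>X. \<forall>Y. measure_pmf.prob (R x) Y \<le> exp \<epsilon> * measure_pmf.prob (R x') Y)"

definition rand_unif :: "('x \<Rightarrow> 'y pmf) \<Rightarrow> 'x set \<Rightarrow> 'y pmf" where
  "rand_unif R H = bind_pmf (pmf_of_set H) R"

definition Q_HR :: "nat \<Rightarrow> nat set \<Rightarrow> (nat \<Rightarrow> 'y pmf) \<Rightarrow> int \<Rightarrow> 'y pmf" where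
  "Q_HR d H R b = (if b = 1 then rand_unif R H else rand_unif R (dom_d d - H))"

definition pm_one :: "int set" where
  "pm_one = {1, -1}"

definition num_distinct :: "nat \<Rightarrow> nat \<Rightarrow> (nat \<Rightarrow> nat \<Rightarrow> 'y pmf) \<Rightarrow> nat" where
  "num_distinct d n Rs = card ((\<lambda>i. restrict (Rs i) (dom_d d)) ` {1..n})"

definition half_subsets :: "nat \<Rightarrow> nat set set" where
  "half_subsets d = {H. H \<subseteq> dom_d d \<and> card H = d div 2}"

end

theory Submission
  imports Defs
begin


definition esym :: "('a \<Rightarrow> real) \<Rightarrow> 'a set \<Rightarrow> nat \<Rightarrow> real" where
  "esym x I k = (\<Sum>S\<in>{S. S \<subseteq> I \<and> card S = k}. \<Prod>i\<in>S. x i)"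

lemma esym_0: "finite I \<Longrightarrow> esym x I 0 = 1"
proof -
  assume f: "finite I"
  have "{S. S \<subseteq> I \<and> card S = 0} = {{}}" using f
    by (auto dest: finite_subset)
  thus ?thesis by (simp add: esym_def)
qed

lemma esym_insert:
  assumes f: "finite I" and a: "a \<notin> I"
  shows "esym x (insert a I) (Suc k) = esym x I (Suc k) + x a * esym x I k"
proof -
  let ?A = "{S. S \<subseteq> I \<and> card S = Suc k}"
  let ?B = "{S. S \<subseteq> I \<and> card S = k}"
  have eq: "{S. S \<subseteq> insert a I \<and> card S = Suc k} = ?A \<union> insert a ` ?B"
  proof (intro equalityI subsetI)
    fix S assume S: "S \<in> {S. S \<subseteq> insert a I \<and> card S = Suc k}"
    have fS: "finite S" using S f by (auto dest: finite_subset)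
    show "S \<in> ?A \<union> insert a ` ?B"
    proof (cases "a \<in> S")
      case True
      hence "S = insert a (S - {a})" by auto
      moreover have "S - {a} \<in> ?B" using S True fS by auto
      ultimately show ?thesis by blast
    next
      case False thus ?thesis using S by auto
    qed
  next
    fix S assume "S \<in> ?A \<union> insert a ` ?B"
    thus "S \<in> {S. S \<subseteq> insert a I \<and> card S = Suc k}"
      using a f by (auto, metis card_insert_disjoint finite_subset subsetD)
  qed
  have fA: "finite ?A" "finite (insert a ` ?B)" using f by auto
  have disj: "?A \<inter> insert a ` ?B = {}" using a by auto
  have inj: "inj_on (insert a) ?B"
  proof (rule inj_onI)
    fix X Y assume "X \<in> ?B" "Y \<in> ?B" "insert a X = insert a Y"
    moreover have "a \<notin> X" "a \<notin> Y" using calculation a by auto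
    ultimately show "X = Y" by (metis Diff_insert_absorb)
  qed
  have "esym x (insert a I) (Suc k) = (\<Sum>S\<in>?A. \<Prod>i\<in>S. x i) + (\<Sum>S\<in>insert a ` ?B. \<Prod>i\<in>S. x i)"
    unfolding esym_def eq by (rule sum.union_disjoint[OF fA disj])
  also have "(\<Sum>S\<in>insert a ` ?B. \<Prod>i\<in>S. x i) = (\<Sum>S\<in>?B. \<Prod>i\<in>insert a S. x i)"
    by (simp add: sum.reindex[OF inj])
  also have "\<dots> = (\<Sum>S\<in>?B. x a * (\<Prod>i\<in>S. x i))"
    using a f by (intro sum.cong refl) (subst prod.insert, auto dest: finite_subset)
  finally show ?thesis by (simp add: esym_def sum_distrib_left)
qed

lemma esym_nonneg: "(\<And>i. i \<in> I \<Longrightarrow> x i \<ge> 0) \<Longrightarrow> esym x I k \<ge> 0"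
  unfolding esym_def by (intro sum_nonneg prod_nonneg) auto

lemma esym_cong: "(\<And>i. i \<in> I \<Longrightarrow> x i = y i) \<Longrightarrow> esym x I k = esym y I k"
  unfolding esym_def by (intro sum.cong refl prod.cong) auto

lemma esym_two:
  assumes f: "finite I" and "i \<noteq> j" "i \<notin> I" "j \<notin> I"
  shows "esym x (insert i (insert j I)) k =
    (if k = 0 then 1 else if k = 1 then esym x I 1 + x i + x j
     else esym x I k + (x i + x j) * esym x I (k - 1) + x i * x j * esym x I (k - 2))"
proof -
  have ji: "i \<notin> insert j I" using assms by auto
  show ?thesis
  proof (cases k)
    case 0 thus ?thesis using f by (simp add: esym_0)
  next
    case (Suc k')
    show ?thesis
    proof (cases k')
      case 0 thus ?thesis using Suc f assms ji
        by (simp add: esym_insert esym_0)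
    next
      case (Suc k'')
      thus ?thesis using \<open>k = Suc k'\<close> f assms ji
        by (simp add: esym_insert algebra_simps)
    qed
  qed
qed

lemma esym_smooth:
  assumes f: "finite I" and ij: "i \<noteq> j" "i \<notin> I" "j \<notin> I"
    and nn: "\<And>l. l \<in> I \<Longrightarrow> x l \<ge> 0"
    and same: "\<And>l. l \<in> I \<Longrightarrow> x' l = x l"
    and s: "x' i + x' j = x i + x j" and p: "x i * x j \<le> x' i * x' j"
  shows "esym x (insert i (insert j I)) k \<le> esym x' (insert i (insert j I)) k"
proof -
  have e: "\<And>k. esym x' I k = esym x I k" using same by (intro esym_cong) auto
  have "x i * x j * esym x I (k - 2) \<le> x' i * x' j * esym x I (k - 2)"
    by (intro mult_right_mono p esym_nonneg nn)
  thus ?thesis using esym_two[OF f ij, of x k] esym_two[OF f ij, of x' k] e s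
    by auto
qed

lemma esym_const:
  fixes x :: "'a \<Rightarrow> real" and cc :: real
  assumes "finite I" "\<And>i. i \<in> I \<Longrightarrow> x i = cc"
  shows "esym x I k = (card I choose k) * cc ^ k"
proof -
  have "esym x I k = (\<Sum>S\<in>{S. S \<subseteq> I \<and> card S = k}. cc ^ k)"
    unfolding esym_def using assms by (intro sum.cong refl) (auto, metis (no_types, lifting) prod.cong prod_constant subsetD)
  also have "\<dots> = (card I choose k) * cc ^ k" using n_subsets[OF assms(1), of k] by simp
  finally show ?thesis .
qed

lemma esym_bound_aux:
  fixes x :: "'a \<Rightarrow> real" and \<mu> :: real
  assumes f: "finite I"
  shows "card {i\<in>I. x i \<noteq> \<mu>} = N \<Longrightarrow> (\<And>i. i \<in> I \<Longrightarrow> x i \<ge> 0) \<Longrightarrow> sum x I = card I * \<mu>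
     \<Longrightarrow> esym x I k \<le> (card I choose k) * \<mu> ^ k"
proof (induction N arbitrary: x rule: less_induct)
  case (less N x)
  show ?case
  proof (cases "\<forall>i\<in>I. x i = \<mu>")
    case True
    have "esym x I k = (card I choose k) * \<mu> ^ k"
      by (rule esym_const[OF f]) (use True in blast)
    thus ?thesis by simp
  next
    case False
    then obtain i0 where i0: "i0 \<in> I" "x i0 \<noteq> \<mu>" by auto
    have "\<exists>i\<in>I. x i < \<mu>"
    proof (rule ccontr)
      assume "\<not> ?thesis"
      hence ge: "\<forall>i\<in>I. x i - \<mu> \<ge> 0" by auto
      have "sum (\<lambda>i. x i - \<mu>) I = 0" using less.prems(3) by (simp add: sum_subtractf)
      moreover have "(\<Sum>i\<in>I. x i - \<mu>) = 0 \<longleftrightarrow> (\<forall>i\<in>I. x i - \<mu> = 0)"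
        by (rule sum_nonneg_eq_0_iff[OF f]) (use ge in blast)
      ultimately have "\<forall>i\<in>I. x i - \<mu> = 0" by blast
      thus False using i0 by auto
    qed
    then obtain i where i: "i \<in> I" "x i < \<mu>" by auto
    have "\<exists>j\<in>I. x j > \<mu>"
    proof (rule ccontr)
      assume "\<not> ?thesis"
      hence ge: "\<forall>i\<in>I. \<mu> - x i \<ge> 0" by auto
      have "sum (\<lambda>i. \<mu> - x i) I = 0" using less.prems(3) by (simp add: sum_subtractf)
      moreover have "(\<Sum>i\<in>I. \<mu> - x i) = 0 \<longleftrightarrow> (\<forall>i\<in>I. \<mu> - x i = 0)"
        by (rule sum_nonneg_eq_0_iff[OF f]) (use ge in blast)
      ultimately have "\<forall>i\<in>I. \<mu> - x i = 0" by blast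
      thus False using i0 by auto
    qed
    then obtain j where j: "j \<in> I" "x j > \<mu>" by auto
    have ij: "i \<noteq> j" using i j by auto
    define I0 where "I0 = I - {i, j}"
    have II: "I = insert i (insert j I0)" using i j unfolding I0_def by auto
    have f0: "finite I0" using f unfolding I0_def by auto
    have ij0: "i \<notin> I0" "j \<notin> I0" unfolding I0_def by auto
    define x' where "x' = x(i := \<mu>, j := x i + x j - \<mu>)"
    have x'i: "x' i = \<mu>" and x'j: "x' j = x i + x j - \<mu>" using ij unfolding x'_def by auto
    have same: "\<And>l. l \<in> I0 \<Longrightarrow> x' l = x l" using ij0 unfolding x'_def by auto
    have "sum x' I = x' i + x' j + sum x' I0" by (subst II) (simp add: f0 ij0 ij)
    also have "sum x' I0 = sum x I0" using same by simp
    also have "x' i + x' j + sum x I0 = sum x I" by (subst (1) II) (simp add: f0 ij0 ij x'i x'j)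
    finally have sx': "sum x' I = card I * \<mu>" using less.prems(3) by simp
    have nn': "\<And>l. l \<in> I \<Longrightarrow> x' l \<ge> 0"
    proof -
      fix l assume "l \<in> I"
      show "x' l \<ge> 0"
      proof (cases "l = i")
        case True thus ?thesis using x'i i less.prems(2)[OF i(1)] by simp
      next
        case False
        show ?thesis
        proof (cases "l = j")
          case True thus ?thesis using x'j i j less.prems(2)[OF i(1)] by simp
        next
          case False
          hence "l \<in> I0" using \<open>l \<noteq> i\<close> \<open>l \<in> I\<close> unfolding I0_def by auto
          thus ?thesis using same less.prems(2) \<open>l \<in> I\<close> by simp
        qed
      qed
    qed
    have sub: "{l\<in>I. x' l \<noteq> \<mu>} \<subseteq> {l\<in>I. x l \<noteq> \<mu>} - {i}"
    proof
      fix l assume l: "l \<in> {l\<in>I. x' l \<noteq> \<mu>}"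
      show "l \<in> {l\<in>I. x l \<noteq> \<mu>} - {i}"
      proof (cases "l = j")
        case True thus ?thesis using j ij by auto
      next
        case False
        hence "l \<noteq> i" using l x'i by auto
        hence "l \<in> I0" using False l unfolding I0_def by auto
        thus ?thesis using same l \<open>l \<noteq> i\<close> by auto
      qed
    qed
    have lt: "card {l\<in>I. x' l \<noteq> \<mu>} < N"
    proof -
      have "card {l\<in>I. x' l \<noteq> \<mu>} \<le> card ({l\<in>I. x l \<noteq> \<mu>} - {i})"
        using sub f by (intro card_mono) auto
      also have "\<dots> < card {l\<in>I. x l \<noteq> \<mu>}"
        using i f by (intro card_Diff1_less) auto
      finally show ?thesis using less.prems(1) by simp
    qed
    have IH: "esym x' I k \<le> (card I choose k) * \<mu> ^ k"
      by (rule less.IH[OF lt refl nn' sx'])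
    have p: "x i * x j \<le> x' i * x' j"
    proof -
      have "0 \<le> (\<mu> - x i) * (x j - \<mu>)" using i j by (intro mult_nonneg_nonneg) auto
      thus ?thesis unfolding x'i x'j by (simp add: algebra_simps)
    qed
    have "esym x I k \<le> esym x' I k"
      unfolding II
    proof (rule esym_smooth[OF f0 ij ij0])
      show "\<And>l. l \<in> I0 \<Longrightarrow> 0 \<le> x l" using less.prems(2) unfolding I0_def by simp
      show "\<And>l. l \<in> I0 \<Longrightarrow> x' l = x l" by (rule same)
      show "x' i + x' j = x i + x j" using x'i x'j by simp
      show "x i * x j \<le> x' i * x' j" by (rule p)
    qed
    with IH show ?thesis by linarith
  qed
qed

lemma esym_bound:
  fixes x :: "'a \<Rightarrow> real"
  assumes "finite I" "I \<noteq> {}" "\<And>i. i \<in> I \<Longrightarrow> x i \<ge> 0"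
  shows "esym x I k \<le> (card I choose k) * (sum x I / card I) ^ k"
  using esym_bound_aux[OF assms(1) refl assms(3), where \<mu>="sum x I / card I" and k=k] assms(1,2)
  by simp




lemma hoeffding_finite:
  fixes b :: "'a \<Rightarrow> real"
  assumes f: "finite I" "I \<noteq> {}" and bnd: "\<And>i. i\<in>I \<Longrightarrow> b i \<in> {lo..hi}"
    and s0: "sum b I = 0" and l: "l > 0"
  shows "(\<Sum>i\<in>I. exp (l * b i)) / card I \<le> exp (l\<^sup>2 * (hi - lo)\<^sup>2 / 8)"
proof -
  interpret interval_bounded_random_variable "measure_pmf (pmf_of_set I)" b lo hi
  proof unfold_locales
    show "b \<in> borel_measurable (measure_pmf (pmf_of_set I))" by simp
    show "AE x in measure_pmf (pmf_of_set I). b x \<in> {lo..hi}"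
      using f bnd by (subst AE_measure_pmf_iff) simp
  qed
  have E: "integral\<^sup>L (measure_pmf (pmf_of_set I)) b = 0" using f s0 by (simp add: integral_pmf_of_set)
  have "nn_integral (measure_pmf (pmf_of_set I)) (\<lambda>x. ennreal (exp (l * (b x - integral\<^sup>L (measure_pmf (pmf_of_set I)) b))))
        \<le> ennreal (exp (l\<^sup>2 * (hi - lo)\<^sup>2 / 8))"
    by (rule Hoeffdings_lemma_nn_integral[OF l])
  also have "nn_integral (measure_pmf (pmf_of_set I)) (\<lambda>x. ennreal (exp (l * (b x - integral\<^sup>L (measure_pmf (pmf_of_set I)) b))))
     = (\<Sum>x\<in>I. ennreal (exp (l * b x))) / card I"
    using f E by (simp add: nn_integral_pmf_of_set)
  also have "(\<Sum>x\<in>I. ennreal (exp (l * b x))) = ennreal (\<Sum>x\<in>I. exp (l * b x))"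
    by (rule sum_ennreal) auto
  also have "ennreal (\<Sum>x\<in>I. exp (l * b x)) / of_nat (card I) = ennreal ((\<Sum>x\<in>I. exp (l * b x)) / card I)"
    using f by (subst divide_ennreal[symmetric]) (auto simp: ennreal_of_nat_eq_real_of_nat card_gt_0_iff intro: sum_nonneg)
  finally show ?thesis
    by (subst (asm) ennreal_le_iff) auto
qed

lemma chernoff_count:
  fixes b :: "'a \<Rightarrow> real"
  assumes f: "finite D" "D \<noteq> {}" and bnd: "\<And>i. i\<in>D \<Longrightarrow> b i \<in> {lo..hi}"
    and s0: "sum b D = 0" and lh: "lo < hi" and t: "t > 0"
  shows "real (card {H. H \<subseteq> D \<and> card H = m \<and> sum b H \<ge> m * t})
           \<le> (card D choose m) * exp (-2 * m * t\<^sup>2 / (hi - lo)\<^sup>2)"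
proof -
  define w where "w = hi - lo"
  have w: "w > 0" using lh unfolding w_def by simp
  define l where "l = 4 * t / w\<^sup>2"
  have l: "l > 0" using t w unfolding l_def by simp
  let ?U = "{H. H \<subseteq> D \<and> card H = m}"
  let ?B = "{H. H \<subseteq> D \<and> card H = m \<and> sum b H \<ge> m * t}"
  have fU: "finite ?U" using f(1) by simp
  have BU: "?B \<subseteq> ?U" by auto
  have "real (card ?B) * exp (l * (m * t)) \<le> (\<Sum>H\<in>?B. exp (l * sum b H))"
    by (rule sum_bounded_below) (use l in auto)
  also have "\<dots> \<le> (\<Sum>H\<in>?U. exp (l * sum b H))"
    by (rule sum_mono2[OF fU BU]) auto
  also have "\<dots> = esym (\<lambda>i. exp (l * b i)) D m"
    unfolding esym_def
  proof (rule sum.cong[OF refl])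
    fix H assume "H \<in> ?U"
    hence "finite H" using f(1) by (auto dest: finite_subset)
    thus "exp (l * sum b H) = (\<Prod>i\<in>H. exp (l * b i))"
      by (simp add: sum_distrib_left exp_sum)
  qed
  also have "\<dots> \<le> (card D choose m) * ((\<Sum>i\<in>D. exp (l * b i)) / card D) ^ m"
    by (rule esym_bound[OF f]) auto
  also have "\<dots> \<le> (card D choose m) * exp (l\<^sup>2 * w\<^sup>2 / 8) ^ m"
    unfolding w_def
    by (intro mult_left_mono power_mono hoeffding_finite[OF f bnd s0 l])
       (auto intro!: sum_nonneg divide_nonneg_nonneg)
  also have "exp (l\<^sup>2 * w\<^sup>2 / 8) ^ m = exp (m * (l\<^sup>2 * w\<^sup>2 / 8))"
    by (subst exp_of_nat_mult) simp
  finally have 1: "real (card ?B) * exp (l * (m * t)) \<le> (card D choose m) * exp (m * (l\<^sup>2 * w\<^sup>2 / 8))" .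
  have "real (card ?B) \<le> (card D choose m) * exp (m * (l\<^sup>2 * w\<^sup>2 / 8)) / exp (l * (m * t))"
    using 1 by (simp add: field_simps)
  also have "\<dots> = (card D choose m) * exp (m * (l\<^sup>2 * w\<^sup>2 / 8) - l * (m * t))"
    by (simp add: exp_diff)
  also have "m * (l\<^sup>2 * w\<^sup>2 / 8) - l * (m * t) = -2 * real m * t\<^sup>2 / w\<^sup>2"
    using w unfolding l_def by (simp add: field_simps power2_eq_square)
  finally show ?thesis unfolding w_def .
qed



lemma tail_bound:
  fixes q :: "nat \<Rightarrow> real"
  assumes f: "finite D" "D \<noteq> {}"
    and nn: "\<And>x. x \<in> D \<Longrightarrow> q x \<ge> 0"
    and priv: "\<And>x x'. x \<in> D \<Longrightarrow> x' \<in> D \<Longrightarrow> q x \<le> exp \<epsilon> * q x'"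
    and P: "sum q D > 0" and t: "t > 0" and e: "\<epsilon> > 0" and s: "\<sigma> = 1 \<or> \<sigma> = -1"
  shows "real (card {H. H \<subseteq> D \<and> card H = m \<and> sum (\<lambda>x. \<sigma> * (card D * q x - sum q D)) H \<ge> m * (t * sum q D)})
           \<le> (card D choose m) * exp (-2 * real m * t\<^sup>2 / (exp \<epsilon> - exp (-\<epsilon>))\<^sup>2)"
proof -
  define S where "S = sum q D"
  have up: "card D * q x \<le> exp \<epsilon> * S" if x: "x \<in> D" for x
  proof -
    have "card D * q x = (\<Sum>x'\<in>D. q x)" by simp
    also have "\<dots> \<le> (\<Sum>x'\<in>D. exp \<epsilon> * q x')" by (rule sum_mono) (use priv x in auto)
    also have "\<dots> = exp \<epsilon> * S" unfolding S_def by (simp add: sum_distrib_left)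
    finally show ?thesis .
  qed
  have lo: "S \<le> exp \<epsilon> * (card D * q x)" if x: "x \<in> D" for x
  proof -
    have "S \<le> (\<Sum>x'\<in>D. exp \<epsilon> * q x)" unfolding S_def by (rule sum_mono) (use priv x in auto)
    also have "\<dots> = exp \<epsilon> * (card D * q x)" by simp
    finally show ?thesis .
  qed
  have lo': "exp (-\<epsilon>) * S \<le> card D * q x" if x: "x \<in> D" for x
  proof -
    have "exp (-\<epsilon>) * S \<le> exp (-\<epsilon>) * (exp \<epsilon> * (card D * q x))"
      by (rule mult_left_mono[OF lo[OF x]]) simp
    also have "\<dots> = card D * q x" by (simp add: exp_minus field_simps)
    finally show ?thesis .
  qed
  define b where "b = (\<lambda>x. \<sigma> * (card D * q x - S))"
  have s0: "sum b D = 0"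
    unfolding b_def S_def by (simp add: sum_distrib_left[symmetric] sum_subtractf)
  have Spos: "S > 0" using P unfolding S_def .
  have ee: "exp (-\<epsilon>) < exp \<epsilon>" using e by simp
  obtain lo hi where bnd: "\<And>x. x \<in> D \<Longrightarrow> b x \<in> {lo..hi}" and w: "hi - lo = S * (exp \<epsilon> - exp (-\<epsilon>))"
  proof (cases "\<sigma> = 1")
    case True
    show ?thesis
    proof (rule that[of "S * (exp (-\<epsilon>) - 1)" "S * (exp \<epsilon> - 1)"])
      fix x assume x: "x \<in> D"
      have u: "card D * q x \<le> exp \<epsilon> * S" by (rule up[OF x])
      have l: "exp (-\<epsilon>) * S \<le> card D * q x" by (rule lo'[OF x])
      have "S * (exp (-\<epsilon>) - 1) \<le> b x" unfolding b_def True using l by (simp add: algebra_simps)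
      moreover have "b x \<le> S * (exp \<epsilon> - 1)" unfolding b_def True using u by (simp add: algebra_simps)
      ultimately show "b x \<in> {S * (exp (-\<epsilon>) - 1)..S * (exp \<epsilon> - 1)}" by simp
    qed (simp add: algebra_simps)
  next
    case False
    hence "\<sigma> = -1" using s by auto
    show ?thesis
    proof (rule that[of "S * (1 - exp \<epsilon>)" "S * (1 - exp (-\<epsilon>))"])
      fix x assume x: "x \<in> D"
      have u: "card D * q x \<le> exp \<epsilon> * S" by (rule up[OF x])
      have l: "exp (-\<epsilon>) * S \<le> card D * q x" by (rule lo'[OF x])
      have "S * (1 - exp \<epsilon>) \<le> b x" unfolding b_def \<open>\<sigma> = -1\<close> using u by (simp add: algebra_simps)
      moreover have "b x \<le> S * (1 - exp (-\<epsilon>))" unfolding b_def \<open>\<sigma> = -1\<close> using l by (simp add: algebra_simps)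
      ultimately show "b x \<in> {S * (1 - exp \<epsilon>)..S * (1 - exp (-\<epsilon>))}" by simp
    qed (simp add: algebra_simps)
  qed
  have "S * (exp \<epsilon> - exp (-\<epsilon>)) > 0" using Spos ee by (intro mult_pos_pos) auto
  hence lh: "lo < hi" using w by linarith
  have tS: "t * S > 0" using t Spos by simp
  have "real (card {H. H \<subseteq> D \<and> card H = m \<and> sum b H \<ge> m * (t * S)})
           \<le> (card D choose m) * exp (-2 * real m * (t * S)\<^sup>2 / (hi - lo)\<^sup>2)"
    by (rule chernoff_count[OF f bnd s0 lh tS])
  also have "-2 * real m * (t * S)\<^sup>2 / (hi - lo)\<^sup>2 = -2 * real m * t\<^sup>2 / (exp \<epsilon> - exp (-\<epsilon>))\<^sup>2"
    unfolding w using Spos by (simp add: power_mult_distrib)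
  finally show ?thesis unfolding b_def S_def .
qed




lemma Q_private:
  fixes R :: "nat \<Rightarrow> 'y::finite pmf"
  assumes H: "H \<subseteq> dom_d d" "card H = m" "card (dom_d d - H) = m" "m > 0"
    and K: "K \<le> exp e'" "0 \<le> e'"
    and i1: "\<And>y. (\<Sum>x\<in>H. pmf (R x) y) \<le> K * (\<Sum>x\<in>dom_d d - H. pmf (R x) y)"
    and i2: "\<And>y. (\<Sum>x\<in>dom_d d - H. pmf (R x) y) \<le> K * (\<Sum>x\<in>H. pmf (R x) y)"
  shows "eps_private pm_one (Q_HR d H R) e'"
proof -
  have fD: "finite (dom_d d)" unfolding dom_d_def by simp
  have fH: "finite H" "H \<noteq> {}" using H fD by (auto dest: finite_subset)
  have fH': "finite (dom_d d - H)" "dom_d d - H \<noteq> {}" using H fD by auto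
  have p1: "pmf (Q_HR d H R 1) y = (\<Sum>x\<in>H. pmf (R x) y) / m" for y
    unfolding Q_HR_def rand_unif_def using pmf_bind_pmf_of_set[OF fH(2,1)] H by simp
  have p2: "pmf (Q_HR d H R (-1)) y = (\<Sum>x\<in>dom_d d - H. pmf (R x) y) / m" for y
    unfolding Q_HR_def rand_unif_def using pmf_bind_pmf_of_set[OF fH'(2,1)] H by simp
  have pw: "pmf (Q_HR d H R a) y \<le> exp e' * pmf (Q_HR d H R a') y"
    if a: "a \<in> pm_one" "a' \<in> pm_one" for a a' y
  proof -
    have e1: "1 \<le> exp e'" using K by simp
    have "a = a' \<or> (a = 1 \<and> a' = -1) \<or> (a = -1 \<and> a' = 1)" using a unfolding pm_one_def by auto
    moreover
    { assume "a = a'"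
      have "pmf (Q_HR d H R a) y * 1 \<le> pmf (Q_HR d H R a) y * exp e'"
        by (rule mult_left_mono[OF e1 pmf_nonneg])
      hence ?thesis using \<open>a = a'\<close> by (simp add: mult.commute) }
    moreover
    { assume aa: "a = 1 \<and> a' = -1"
      have "(\<Sum>x\<in>H. pmf (R x) y) \<le> exp e' * (\<Sum>x\<in>dom_d d - H. pmf (R x) y)"
        using i1[of y] K(1) by (meson dual_order.trans mult_right_mono sum_nonneg pmf_nonneg)
      hence "(\<Sum>x\<in>H. pmf (R x) y) / m \<le> (exp e' * (\<Sum>x\<in>dom_d d - H. pmf (R x) y)) / m"
        by (rule divide_right_mono) simp
      hence ?thesis using aa p1 p2 by simp }
    moreover
    { assume aa: "a = -1 \<and> a' = 1"
      have "(\<Sum>x\<in>dom_d d - H. pmf (R x) y) \<le> exp e' * (\<Sum>x\<in>H. pmf (R x) y)"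
        using i2[of y] K(1) by (meson dual_order.trans mult_right_mono sum_nonneg pmf_nonneg)
      hence "(\<Sum>x\<in>dom_d d - H. pmf (R x) y) / m \<le> (exp e' * (\<Sum>x\<in>H. pmf (R x) y)) / m"
        by (rule divide_right_mono) simp
      hence ?thesis using aa p2 p1 by simp }
    ultimately show ?thesis by blast
  qed
  show ?thesis unfolding eps_private_def
  proof (intro ballI allI)
    fix a a' and Y :: "'y set"
    assume a: "a \<in> pm_one" "a' \<in> pm_one"
    have "measure_pmf.prob (Q_HR d H R a) Y = (\<Sum>y\<in>Y. pmf (Q_HR d H R a) y)"
      by (rule measure_measure_pmf_finite) simp
    also have "\<dots> \<le> (\<Sum>y\<in>Y. exp e' * pmf (Q_HR d H R a') y)"
      by (rule sum_mono) (rule pw[OF a])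
    also have "\<dots> = exp e' * measure_pmf.prob (Q_HR d H R a') Y"
      by (simp add: sum_distrib_left measure_measure_pmf_finite)
    finally show "measure_pmf.prob (Q_HR d H R a) Y \<le> exp e' * measure_pmf.prob (Q_HR d H R a') Y" .
  qed
qed



lemma ratio_helper:
  fixes A B P t :: real
  assumes "2*A \<le> (1+t)*P" "(1-t)*P \<le> 2*B" "0 \<le> t" "t < 1"
  shows "A \<le> (1+t)/(1-t) * B"
proof -
  have "2*A*(1-t) \<le> (1+t)*P*(1-t)" by (rule mult_right_mono) (use assms in auto)
  also have "\<dots> = (1+t)*((1-t)*P)" by simp
  also have "\<dots> \<le> (1+t)*(2*B)" by (rule mult_left_mono) (use assms in auto)
  finally have 1: "A*(1-t) \<le> (1+t)*B" by simp
  have p: "1 - t > 0" using assms by simp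
  have "A \<le> (1+t)*B/(1-t)" using 1 by (simp only: pos_le_divide_eq[OF p])
  thus ?thesis by simp
qed

lemma K_helper:
  fixes t :: real
  assumes "0 \<le> t" "t < 1/2"
  shows "(1+t)/(1-t) \<le> exp (4*t)"
proof -
  have a: "(1+t) \<le> (1+2*t)^2*(1-t)"
  proof -
    have e: "(1+2*t)^2*(1-t) - (1+t) = 2*t*(1-2*t^2)" by (simp add: algebra_simps power2_eq_square)
    have "t*t \<le> (1/2)*(1/2)" by (rule mult_mono) (use assms in auto)
    hence "t^2 \<le> 1/4" by (simp add: power2_eq_square)
    hence "1-2*t^2 \<ge> 0" by simp
    hence "2*t*(1-2*t^2) \<ge> 0" using assms by simp
    thus ?thesis using e by linarith
  qed
  have "(1+2*t)^2 \<le> exp (2*t) ^ 2"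
    by (rule power_mono) (use exp_ge_add_one_self[of "2*t"] assms in auto)
  also have "exp (2*t) ^ 2 = exp (4*t)" using exp_of_nat_mult[of 2 "2*t"] by simp
  finally have b: "(1+2*t)^2 \<le> exp (4*t)" .
  have "(1+2*t)^2*(1-t) \<le> exp (4*t) * (1-t)" by (rule mult_right_mono[OF b]) (use assms in simp)
  with a have 1: "(1+t) \<le> exp (4*t) * (1-t)" by linarith
  have p: "1 - t > 0" using assms by simp
  show ?thesis using 1 by (simp only: pos_divide_le_eq[OF p])
qed

lemma ratio_both:
  fixes A B t :: real
  assumes a1: "2*A \<le> (1+t)*(B+A)" and a2: "(1-t)*(B+A) \<le> 2*A" and t: "0 \<le> t" "t < 1"
  shows "A \<le> (1+t)/(1-t) * B" "B \<le> (1+t)/(1-t) * A"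
proof -
  define Z where "Z = (1+t)*(B+A)"
  have e: "(1-t)*(B+A) = 2*(B+A) - Z" unfolding Z_def by (simp add: algebra_simps)
  have a1': "2*A \<le> Z" using a1 unfolding Z_def .
  have c1: "(1-t)*(B+A) \<le> 2*B" unfolding e using a1' by (simp add: algebra_simps)
  have c2: "2*B \<le> (1+t)*(B+A)" unfolding Z_def[symmetric] using a2 unfolding e by (simp add: algebra_simps)
  show "A \<le> (1+t)/(1-t) * B"
    by (rule ratio_helper[OF a1 c1 t])
  show "B \<le> (1+t)/(1-t) * A"
    by (rule ratio_helper[OF c2 a2 t])
qed



theorem mainTheorem6:
  fixes \<epsilon> :: real and d n :: nat and Rs :: "nat \<Rightarrow> nat \<Rightarrow> ('y::finite) pmf"
  assumes "\<epsilon> > 0"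
    and "even d"
    and "\<And>i. i \<in> {1..n} \<Longrightarrow> eps_private (dom_d d) (Rs i) \<epsilon>"
    and "real d > 4 * (exp (2 * \<epsilon>) - 1)^2 * ln (12 * real CARD('y) * real (num_distinct d n Rs))"
  shows "measure_pmf.prob (pmf_of_set (half_subsets d))
           {H. \<forall>i\<in>{1..n}. eps_private pm_one (Q_HR d H (Rs i))
                ((exp (2 * \<epsilon>) - 1) * sqrt (16 / real d * ln (12 * real CARD('y) * real (num_distinct d n Rs))))}
         \<ge> 2 / 3"
proof -
  define D where "D = dom_d d"
  define m where "m = d div 2"
  define U where "U = half_subsets d"
  define c where "c = exp (2 * \<epsilon>) - 1"
  define k where "k = num_distinct d n Rs"
  define L where "L = ln (12 * real CARD('y) * real k)"
  define e' where "e' = c * sqrt (16 / real d * L)"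
  define G where "G = {H. \<forall>i\<in>{1..n}. eps_private pm_one (Q_HR d H (Rs i)) e'}"
  have fD: "finite D" and cD: "card D = d" unfolding D_def dom_d_def by auto
  have dm: "d = 2 * m" using assms(2) unfolding m_def by simp
  have U_eq: "U = {H. H \<subseteq> D \<and> card H = m}" unfolding U_def half_subsets_def D_def m_def by simp
  have fU: "finite U" unfolding U_eq using fD by simp
  define N where "N = card U"
  have N: "N = d choose m" unfolding N_def U_eq using n_subsets[OF fD, of m] cD by simp
  have Npos: "N > 0" unfolding N using dm by simp
  hence Une: "U \<noteq> {}" unfolding N_def by auto
  have prob: "measure_pmf.prob (pmf_of_set U) G = card (U \<inter> G) / N"
    unfolding N_def by (rule measure_pmf_of_set[OF Une fU])
  have main: "measure_pmf.prob (pmf_of_set U) G \<ge> 2/3"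
  proof (cases "n = 0")
    case True
    hence "G = UNIV" unfolding G_def by simp
    thus ?thesis using prob Npos unfolding N_def by simp
  next
    case False
    hence n1: "n \<ge> 1" by simp
    define F where "F = (\<lambda>i. restrict (Rs i) D) ` {1..n}"
    have kF: "k = card F" unfolding k_def F_def num_distinct_def D_def ..
    have fF: "finite F" unfolding F_def by simp
    have Fne: "F \<noteq> {}" unfolding F_def using n1 by auto
    have kpos: "k \<ge> 1" using fF Fne kF by (simp add: Suc_le_eq card_gt_0_iff)
    define Yc where "Yc = real CARD('y)"
    have Yc: "Yc \<ge> 1" unfolding Yc_def by simp
    have "12 * Yc * real k \<ge> 12 * 1 * 1"
      using Yc kpos by (intro mult_mono) auto
    hence L12: "12 * Yc * real k > 1" by simp
    have Lpos: "L > 0" unfolding L_def Yc_def[symmetric] using L12 by simp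
    have cpos: "c > 0" unfolding c_def using assms(1) by simp
    have hyp: "real d > 4 * c^2 * L" using assms(4) unfolding c_def L_def k_def by simp
    have "4 * c^2 * L > 0" using cpos Lpos by simp
    hence dpos: "real d > 0" using hyp by linarith
    hence mpos: "m > 0" using dm by simp
    define t where "t = c * sqrt (L / d)"
    have tpos: "t > 0" unfolding t_def using cpos Lpos dpos by simp
    have t2: "t^2 = c^2 * L / d" unfolding t_def using Lpos dpos
      by (simp add: power_mult_distrib)
    have "c^2 * L < real d * (1/4)" using hyp by simp
    hence t4: "t^2 < 1/4" unfolding t2 by (simp only: pos_divide_less_eq[OF dpos])
    have thalf: "t < 1/2"
    proof (rule ccontr)
      assume "\<not> t < 1/2"
      hence "1/2 \<le> t" by simp
      hence "(1/2)*(1/2) \<le> t*t" by (intro mult_mono) auto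
      thus False using t4 by (simp add: power2_eq_square)
    qed
    have e't: "e' = 4 * t"
    proof -
      have 1: "16 / real d * L = 16 * (L / d)" by simp
      have 2: "sqrt 16 = (4::real)" using real_sqrt_abs[of 4] by simp
      have "sqrt (16 / real d * L) = 4 * sqrt (L / d)" unfolding 1 real_sqrt_mult 2 ..
      thus ?thesis unfolding e'_def t_def by simp
    qed
    define K where "K = (1+t)/(1-t)"
    have K: "K \<le> exp e'" unfolding K_def e't by (rule K_helper) (use tpos thalf in auto)
    have e'nn: "0 \<le> e'" using e't tpos by simp
    define w0 where "w0 = exp \<epsilon> - exp (-\<epsilon>)"
    have w0pos: "w0 > 0" unfolding w0_def using assms(1) by simp
    have cw: "c = exp \<epsilon> * w0"
    proof -
      have "exp (2*\<epsilon>) = exp (\<epsilon> + \<epsilon>)" by simp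
      also have "\<dots> = exp \<epsilon> * exp \<epsilon>" by (rule exp_add)
      finally have 1: "exp (2*\<epsilon>) = exp \<epsilon> * exp \<epsilon>" .
      have 2: "exp \<epsilon> * exp (-\<epsilon>) = 1" by (simp add: exp_minus)
      show ?thesis unfolding c_def w0_def right_diff_distrib 1 2 ..
    qed
    have w0c: "w0 \<le> c" unfolding cw using w0pos assms(1) by simp
    have expo: "exp (-2 * real m * t\<^sup>2 / w0\<^sup>2) \<le> 1 / (12 * Yc * real k)"
    proof -
      have "L * w0^2 \<le> L * c^2" using w0pos w0c Lpos by (intro mult_left_mono power_mono) auto
      hence "L * w0^2 \<le> c^2 * L" by (simp add: mult.commute)
      moreover have w2: "w0^2 > 0" using w0pos by simp
      ultimately have "L \<le> c^2 * L / w0^2" by (simp only: pos_le_divide_eq[OF w2])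
      also have "c^2 * L / w0^2 = 2 * real m * t\<^sup>2 / w0\<^sup>2" using t2 dm dpos by simp
      finally have "-2 * real m * t\<^sup>2 / w0\<^sup>2 \<le> - L" by simp
      hence "exp (-2 * real m * t\<^sup>2 / w0\<^sup>2) \<le> exp (-L)" by simp
      also have "exp (-L) = 1 / (12 * Yc * real k)"
        unfolding L_def Yc_def[symmetric] using L12 by (simp add: exp_minus inverse_eq_divide)
      finally show ?thesis .
    qed
    define P where "P = (\<lambda>(f::nat \<Rightarrow> 'y pmf) y. \<Sum>x\<in>D. pmf (f x) y)"
    define Bup where "Bup = (\<lambda>(f::nat \<Rightarrow> 'y pmf) y. {H. H \<subseteq> D \<and> card H = m \<and>
       sum (\<lambda>x. 1 * (real (card D) * pmf (f x) y - (\<Sum>x\<in>D. pmf (f x) y))) H \<ge> m * (t * (\<Sum>x\<in>D. pmf (f x) y))})"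
    define Blo where "Blo = (\<lambda>(f::nat \<Rightarrow> 'y pmf) y. {H. H \<subseteq> D \<and> card H = m \<and>
       sum (\<lambda>x. (-1) * (real (card D) * pmf (f x) y - (\<Sum>x\<in>D. pmf (f x) y))) H \<ge> m * (t * (\<Sum>x\<in>D. pmf (f x) y))})"
    define Bad where "Bad = (\<Union>f\<in>F. \<Union>y\<in>{y. P f y > 0}. Bup f y \<union> Blo f y)"
    define \<beta> where "\<beta> = real N / (12 * Yc * real k)"
    have Dne: "D \<noteq> {}" using cD dpos by auto
    have privF: "pmf (f x) y \<le> exp \<epsilon> * pmf (f x') y"
      if f: "f \<in> F" and x: "x \<in> D" "x' \<in> D" for f x x' y
    proof -
      obtain i where i: "i \<in> {1..n}" "f = restrict (Rs i) D" using f unfolding F_def by auto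
      have "measure_pmf.prob (Rs i x) {y} \<le> exp \<epsilon> * measure_pmf.prob (Rs i x') {y}"
        using assms(3)[OF i(1)] x unfolding eps_private_def D_def by blast
      thus ?thesis using i x by (simp add: measure_pmf_single)
    qed
    have cardB: "real (card (Bup f y)) \<le> \<beta> \<and> real (card (Blo f y)) \<le> \<beta>"
      if f: "f \<in> F" and Py: "P f y > 0" for f y
    proof -
      have Py': "(\<Sum>x\<in>D. pmf (f x) y) > 0" using Py unfolding P_def by simp
      have bnd: "real N * exp (-2 * real m * t\<^sup>2 / (exp \<epsilon> - exp (-\<epsilon>))\<^sup>2) \<le> \<beta>"
      proof -
        have "real N * exp (-2 * real m * t\<^sup>2 / (exp \<epsilon> - exp (-\<epsilon>))\<^sup>2) \<le> real N * (1 / (12 * Yc * real k))"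
          by (rule mult_left_mono) (use expo in \<open>auto simp: w0_def\<close>)
        thus ?thesis unfolding \<beta>_def by simp
      qed
      have "real (card (Bup f y)) \<le> (card D choose m) * exp (-2 * real m * t\<^sup>2 / (exp \<epsilon> - exp (-\<epsilon>))\<^sup>2)"
        unfolding Bup_def
        by (rule tail_bound[OF fD Dne _ privF[OF f] Py' tpos assms(1)]) auto
      moreover have "real (card (Blo f y)) \<le> (card D choose m) * exp (-2 * real m * t\<^sup>2 / (exp \<epsilon> - exp (-\<epsilon>))\<^sup>2)"
        unfolding Blo_def
        by (rule tail_bound[OF fD Dne _ privF[OF f] Py' tpos assms(1)]) auto
      ultimately show ?thesis using bnd cD N by simp
    qed
    have finB: "finite Bad"
    proof (rule finite_subset)
      show "Bad \<subseteq> Pow D" unfolding Bad_def Bup_def Blo_def by auto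
    qed (use fD in simp)
    have cardBad: "real (card Bad) \<le> real N / 6"
    proof -
      have "card Bad \<le> (\<Sum>f\<in>F. card (\<Union>y\<in>{y. P f y > 0}. Bup f y \<union> Blo f y))"
        unfolding Bad_def by (rule card_UN_le[OF fF])
      also have "\<dots> \<le> (\<Sum>f\<in>F. \<Sum>y\<in>{y. P f y > 0}. card (Bup f y \<union> Blo f y))"
        by (intro sum_mono card_UN_le) simp
      also have "\<dots> \<le> (\<Sum>f\<in>F. \<Sum>y\<in>{y. P f y > 0}. card (Bup f y) + card (Blo f y))"
        by (intro sum_mono card_Un_le)
      finally have 0: "card Bad \<le> (\<Sum>f\<in>F. \<Sum>y\<in>{y. P f y > 0}. card (Bup f y) + card (Blo f y))" .
      have 1: "real (card Bad) \<le> (\<Sum>f\<in>F. \<Sum>y\<in>{y. P f y > 0}. real (card (Bup f y)) + real (card (Blo f y)))"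
        using of_nat_mono[OF 0, where 'a=real] by simp
      also have "\<dots> \<le> (\<Sum>f\<in>F. \<Sum>y\<in>{y. P f y > 0}. 2 * \<beta>)"
        by (intro sum_mono) (use cardB in fastforce)
      also have "\<dots> \<le> (\<Sum>f\<in>F. \<Sum>y\<in>(UNIV::'y set). 2 * \<beta>)"
        by (intro sum_mono sum_mono2) (auto simp: \<beta>_def Yc_def)
      also have "\<dots> = real k * (Yc * (2 * \<beta>))" unfolding kF Yc_def by simp
      also have "\<dots> = real N / 6" unfolding \<beta>_def using kpos Yc by (simp add: field_simps)
      finally show ?thesis .
    qed
    have good: "H \<in> G" if HU: "H \<in> U" and HB: "H \<notin> Bad" for H
      unfolding G_def
    proof (intro CollectI ballI)
      fix i assume i: "i \<in> {1..n}"
      define f where "f = restrict (Rs i) D"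
      have fF': "f \<in> F" unfolding f_def F_def using i by auto
      have HD: "H \<subseteq> D" and cH: "card H = m" using HU unfolding U_eq by auto
      have fH: "finite H" using HD fD by (rule finite_subset)
      have cDH: "card (D - H) = m" using card_Diff_subset[OF fH HD] cD cH dm by simp
      have fx: "\<And>x. x \<in> D \<Longrightarrow> f x = Rs i x" unfolding f_def by simp
      have ineqs: "2 * (\<Sum>x\<in>H. pmf (Rs i x) y) \<le> (1+t) * (\<Sum>x\<in>D. pmf (Rs i x) y) \<and>
                   (1-t) * (\<Sum>x\<in>D. pmf (Rs i x) y) \<le> 2 * (\<Sum>x\<in>H. pmf (Rs i x) y)" for y
      proof -
        define A where "A = (\<Sum>x\<in>H. pmf (Rs i x) y)"
        define S where "S = (\<Sum>x\<in>D. pmf (Rs i x) y)"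
        have SA: "S = (\<Sum>x\<in>D - H. pmf (Rs i x) y) + A"
          unfolding S_def A_def by (rule sum.subset_diff[OF HD fD])
        have Bnn: "(\<Sum>x\<in>D - H. pmf (Rs i x) y) \<ge> 0" by (simp add: sum_nonneg)
        have Ann: "A \<ge> 0" unfolding A_def by (simp add: sum_nonneg)
        have PS: "(\<Sum>x\<in>D. pmf (f x) y) = S" unfolding S_def using fx by simp
        show ?thesis
        proof (cases "S > 0")
          case False
          hence "S = 0" using SA Bnn Ann by linarith
          hence "A = 0" using SA Bnn Ann by linarith
          thus ?thesis using \<open>S = 0\<close> unfolding A_def[symmetric] S_def[symmetric] by simp
        next
          case True
          hence yP: "y \<in> {y. P f y > 0}" unfolding P_def using PS by simp
          have nU: "H \<notin> Bup f y" and nL: "H \<notin> Blo f y" using HB fF' yP unfolding Bad_def by blast+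
          have sH: "sum (\<lambda>x. real (card D) * pmf (f x) y - S) H = real d * A - real m * S"
          proof -
            have "sum (\<lambda>x. real (card D) * pmf (f x) y - S) H
                = sum (\<lambda>x. real d * pmf (Rs i x) y - S) H"
              using fx HD cD by (intro sum.cong refl) auto
            also have "\<dots> = real d * A - real m * S"
              unfolding A_def by (simp add: sum_subtractf sum_distrib_left cH)
            finally show ?thesis .
          qed
          have nU': "\<not> (m * (t * (\<Sum>x\<in>D. pmf (f x) y)) \<le> sum (\<lambda>x. 1 * (real (card D) * pmf (f x) y - (\<Sum>x\<in>D. pmf (f x) y))) H)"
            using nU HD cH unfolding Bup_def by auto
          hence "\<not> (m * (t * S) \<le> sum (\<lambda>x. real (card D) * pmf (f x) y - S) H)"
            unfolding PS by simp
          hence "\<not> (m * (t * S) \<le> real d * A - real m * S)" by (simp only: sH not_False_eq_True)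
          moreover have dd: "real d = 2 * real m" using dm by simp
          have e1: "real m * (2 * A - S) = real d * A - real m * S" unfolding dd by (simp add: algebra_simps)
          ultimately have u: "real m * (2 * A - S) < real m * (t * S)" unfolding e1 by linarith
          have nL': "\<not> (m * (t * (\<Sum>x\<in>D. pmf (f x) y)) \<le> sum (\<lambda>x. (-1) * (real (card D) * pmf (f x) y - (\<Sum>x\<in>D. pmf (f x) y))) H)"
            using nL HD cH unfolding Blo_def by auto
          hence "\<not> (m * (t * S) \<le> sum (\<lambda>x. (-1) * (real (card D) * pmf (f x) y - S)) H)"
            unfolding PS by simp
          moreover have "sum (\<lambda>x. (-1) * (real (card D) * pmf (f x) y - S)) H = - (real d * A - real m * S)"
            by (simp only: mult_minus1 sum_negf sH)
          ultimately have "\<not> (m * (t * S) \<le> - (real d * A - real m * S))" by simp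
          moreover have e2: "real m * (S - 2 * A) = - (real d * A - real m * S)" unfolding dd by (simp add: algebra_simps)
          ultimately have l: "real m * (S - 2 * A) < real m * (t * S)" unfolding e2 by linarith
          have mp: "real m > 0" using mpos by simp
          have "2 * A - S < t * S" using u mp by (simp only: mult_less_cancel_left_pos)
          moreover have "S - 2 * A < t * S" using l mp by (simp only: mult_less_cancel_left_pos)
          ultimately show ?thesis unfolding A_def[symmetric] S_def[symmetric] by (simp add: algebra_simps)
        qed
      qed
      show "eps_private pm_one (Q_HR d H (Rs i)) e'"
      proof (rule Q_private[where m = m and K = K])
        show "H \<subseteq> dom_d d" using HD unfolding D_def .
        show "card H = m" by (rule cH)
        show "card (dom_d d - H) = m" using cDH unfolding D_def .
        show "m > 0" by (rule mpos)
        show "K \<le> exp e'" by (rule K)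
        show "0 \<le> e'" by (rule e'nn)
      next
        fix y
        have SA: "(\<Sum>x\<in>D. pmf (Rs i x) y) = (\<Sum>x\<in>D - H. pmf (Rs i x) y) + (\<Sum>x\<in>H. pmf (Rs i x) y)"
          by (rule sum.subset_diff[OF HD fD])
        have "(\<Sum>x\<in>H. pmf (Rs i x) y) \<le> (1+t)/(1-t) * (\<Sum>x\<in>D - H. pmf (Rs i x) y)"
          using ineqs[of y, unfolded SA] tpos thalf by (intro ratio_both(1)) auto
        thus "(\<Sum>x\<in>H. pmf (Rs i x) y) \<le> K * (\<Sum>x\<in>dom_d d - H. pmf (Rs i x) y)"
          unfolding K_def D_def .
      next
        fix y
        have SA: "(\<Sum>x\<in>D. pmf (Rs i x) y) = (\<Sum>x\<in>D - H. pmf (Rs i x) y) + (\<Sum>x\<in>H. pmf (Rs i x) y)"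
          by (rule sum.subset_diff[OF HD fD])
        have "(\<Sum>x\<in>D - H. pmf (Rs i x) y) \<le> (1+t)/(1-t) * (\<Sum>x\<in>H. pmf (Rs i x) y)"
          using ineqs[of y, unfolded SA] tpos thalf by (intro ratio_both(2)) auto
        thus "(\<Sum>x\<in>dom_d d - H. pmf (Rs i x) y) \<le> K * (\<Sum>x\<in>H. pmf (Rs i x) y)"
          unfolding K_def D_def .
      qed
    qed
    have "U \<subseteq> (U \<inter> G) \<union> Bad" using good by blast
    hence "card U \<le> card ((U \<inter> G) \<union> Bad)" by (intro card_mono) (use fU finB in auto)
    also have "\<dots> \<le> card (U \<inter> G) + card Bad" by (rule card_Un_le)
    finally have "real N \<le> real (card (U \<inter> G)) + real (card Bad)" unfolding N_def by linarith
    hence "real (card (U \<inter> G)) \<ge> 5/6 * real N" using cardBad by linarith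
    hence "card (U \<inter> G) / real N \<ge> 5/6" using Npos by (simp add: pos_le_divide_eq)
    thus ?thesis using prob by linarith
  qed
  thus ?thesis unfolding G_def e'_def L_def k_def c_def U_def .
qed


end
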